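(* Let $G=(V,P,d)$ be a reversible metric Markov chain with $d$ the combinatorial distance and $m(V)=1$. Then \[ h\le\frac{57\,\mathrm{Deg}_{\max}}{\operatorname{diam}_{\operatorname{obs}}^{(1/8)}}. \]
   Context: $V$ finite; $P:V\times V\to[0,\infty)$ with symmetric support, connected; $x\sim y$ iff $x\ne y$, $P(x,y)>0$; $d(x,y)$ is the minimal number of edges on a path from $x$ to $y$; $m$ the probability with $m(x)P(x,y)=m(y)P(y,x)$. $|\partial W|=\sum_{x\in W,y\notin W}P(x,y)m(x)d(x,y)$; $h=\inf\{|\partial W|/m(W):W\neq\emptyset,\ m(W)\le\frac12\}$. $\mathrm{Deg}_{\max}=\max_x\sum_{y\ne x}P(x,y)$. $\operatorname{cl}(B)=B\cup\{x:x\sim y\text{ for some }y\in B\}$; $\operatorname{diam}_{\operatorname{obs}}^{(\varepsilon)}=\sup\{d(A,B):m(A)\ge\varepsilon,\ m(\operatorname{cl}(B))\ge\varepsilon\}$ with $d(A,B)=\min_{a\in A,b\in B}d(a,b)$. *)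

theory Defs
  imports Complex_Main
begin

text \<open>Vertex set V is the (finite) universe of the type 'v.
  P is the transition weight function, m the reversible probability measure.\<close>

definition adj :: "('v \<Rightarrow> 'v \<Rightarrow> real) \<Rightarrow> 'v \<Rightarrow> 'v \<Rightarrow> bool" where
  "adj P x y \<longleftrightarrow> x \<noteq> y \<and> P x y > 0"

definition comb_dist :: "('v \<Rightarrow> 'v \<Rightarrow> real) \<Rightarrow> 'v \<Rightarrow> 'v \<Rightarrow> nat" where
  "comb_dist P x y = (LEAST n. (adj P ^^ n) x y)"

definition meas :: "('v \<Rightarrow> real) \<Rightarrow> 'v set \<Rightarrow> real" where
  "meas m W = (\<Sum>x\<in>W. m x)"

definition boundary :: "('v::finite \<Rightarrow> 'v \<Rightarrow> real) \<Rightarrow> ('v \<Rightarrow> real) \<Rightarrow> 'v set \<Rightarrow> real" where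
  "boundary P m W = (\<Sum>x\<in>W. \<Sum>y\<in>UNIV - W. P x y * m x * real (comb_dist P x y))"

definition cheeger :: "('v::finite \<Rightarrow> 'v \<Rightarrow> real) \<Rightarrow> ('v \<Rightarrow> real) \<Rightarrow> real" where
  "cheeger P m = Inf {boundary P m W / meas m W | W. W \<noteq> {} \<and> meas m W \<le> 1/2}"

definition deg_max :: "('v::finite \<Rightarrow> 'v \<Rightarrow> real) \<Rightarrow> real" where
  "deg_max P = Max (range (\<lambda>x. \<Sum>y\<in>UNIV - {x}. P x y))"

definition closure_set :: "('v \<Rightarrow> 'v \<Rightarrow> real) \<Rightarrow> 'v set \<Rightarrow> 'v set" where
  "closure_set P B = B \<union> {x. \<exists>y\<in>B. adj P x y}"

definition set_dist :: "('v \<Rightarrow> 'v \<Rightarrow> real) \<Rightarrow> 'v set \<Rightarrow> 'v set \<Rightarrow> nat" where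
  "set_dist P A B = Min {comb_dist P a b | a b. a \<in> A \<and> b \<in> B}"

definition obs_diam :: "('v::finite \<Rightarrow> 'v \<Rightarrow> real) \<Rightarrow> ('v \<Rightarrow> real) \<Rightarrow> real \<Rightarrow> real" where
  "obs_diam P m \<epsilon> = Sup {real (set_dist P A B) | A B.
      meas m A \<ge> \<epsilon> \<and> meas m (closure_set P B) \<ge> \<epsilon>}"

end

theory Submission
  imports Defs
begin

lemma comb_dist_adj:
  assumes "adj P x y" shows "comb_dist P x y = 1"
  unfolding comb_dist_def
proof (rule Least_equality)
  show "(adj P ^^ 1) x y" using assms by (auto simp: relcompp_apply)
next
  fix n assume "(adj P ^^ n) x y"
  then show "1 \<le> n" using assms by (cases n) (auto simp: adj_def)
qed

lemma comb_dist_exists: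
  assumes "(adj P)\<^sup>*\<^sup>* x y" shows "(adj P ^^ comb_dist P x y) x y"
  unfolding comb_dist_def by (rule LeastI_ex) (use assms rtranclp_power in metis)

lemma comb_dist_step:
  assumes "(adj P)\<^sup>*\<^sup>* z x" "adj P x y"
  shows "comb_dist P z y \<le> comb_dist P z x + 1"
proof -
  have "(adj P ^^ Suc (comb_dist P z x)) z y"
    using relpowp_Suc_I[OF comb_dist_exists[OF assms(1)] assms(2)] .
  then show ?thesis unfolding comb_dist_def[of P z y] by (metis Least_le Suc_eq_plus1 comb_dist_def)
qed

lemma comb_dist_refl: "comb_dist P x x = 0"
  unfolding comb_dist_def by (rule Least_eq_0) simp

lemma comb_dist_pos:
  assumes "(adj P)\<^sup>*\<^sup>* x y" "x \<noteq> y" shows "comb_dist P x y \<ge> 1"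
  using comb_dist_exists[OF assms(1)] assms(2)
  by (cases "comb_dist P x y") auto

lemma bnd_eq:
  fixes P :: "'v::finite \<Rightarrow> 'v \<Rightarrow> real"
  assumes "\<forall>x y. P x y \<ge> 0"
  shows "boundary P m W = (\<Sum>x\<in>W. \<Sum>y\<in>UNIV - W. m x * P x y)"
  unfolding boundary_def
proof (intro sum.cong refl)
  fix x y assume "x \<in> W" "y \<in> UNIV - W"
  then have "x \<noteq> y" by auto
  show "P x y * m x * real (comb_dist P x y) = m x * P x y"
  proof (cases "P x y > 0")
    case True
    then have "adj P x y" using \<open>x \<noteq> y\<close> by (simp add: adj_def)
    then show ?thesis by (simp add: comb_dist_adj)
  next
    case False
    then have "P x y = 0" using assms[rule_format, of x y] by linarith
    then show ?thesis by simp
  qed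
qed

lemma bnd_compl:
  fixes P :: "'v::finite \<Rightarrow> 'v \<Rightarrow> real"
  assumes "\<forall>x y. P x y \<ge> 0" "\<forall>x y. m x * P x y = m y * P y x"
  shows "boundary P m (-W) = boundary P m W"
proof -
  have "boundary P m (-W) = (\<Sum>x\<in>-W. \<Sum>y\<in>W. m x * P x y)"
    using bnd_eq[OF assms(1)] by (simp add: Compl_eq_Diff_UNIV[symmetric])
  also have "\<dots> = (\<Sum>x\<in>-W. \<Sum>y\<in>W. m y * P y x)" using assms(2) by simp
  also have "\<dots> = (\<Sum>y\<in>W. \<Sum>x\<in>-W. m y * P y x)" by (rule sum.swap)
  also have "\<dots> = boundary P m W"
    using bnd_eq[OF assms(1)] by (simp add: Compl_eq_Diff_UNIV[symmetric])
  finally show ?thesis .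
qed

lemma cheeger_le:
  fixes P :: "'v::finite \<Rightarrow> 'v \<Rightarrow> real"
  assumes "W \<noteq> {}" "meas m W \<le> 1/2"
  shows "cheeger P m \<le> boundary P m W / meas m W"
  unfolding cheeger_def
proof (rule cInf_lower)
  show "boundary P m W / meas m W \<in> {boundary P m W / meas m W |W. W \<noteq> {} \<and> meas m W \<le> 1 / 2}"
    using assms by blast
  have "finite {boundary P m W / meas m W |W. W \<noteq> {} \<and> meas m W \<le> 1 / 2}"
    by (rule finite_image_set) simp
  then show "bdd_below {boundary P m W / meas m W |W. W \<noteq> {} \<and> meas m W \<le> 1 / 2}"
    by (rule bdd_below_finite)
qed

lemma level_sum:
  fixes P :: "'v::finite \<Rightarrow> 'v \<Rightarrow> real" and f :: "'v \<Rightarrow> nat"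
  assumes P_nonneg: "\<forall>x y. P x y \<ge> 0" and m_nonneg: "\<forall>x. m x \<ge> 0"
    and m_prob: "(\<Sum>x\<in>UNIV. m x) = 1"
    and lip: "\<And>x y. adj P x y \<Longrightarrow> f y \<le> f x + 1"
  shows "(\<Sum>k<N. boundary P m {x. f x \<le> k}) \<le> deg_max P"
proof -
  let ?e = "\<lambda>x y. m x * P x y"
  have e_nn: "?e x y \<ge> 0" for x y using P_nonneg m_nonneg by simp
  have b: "boundary P m {x. f x \<le> k} =
     (\<Sum>x\<in>UNIV. \<Sum>y\<in>UNIV. if f x \<le> k \<and> \<not> f y \<le> k then ?e x y else 0)" for k
  proof -
    have "boundary P m {x. f x \<le> k} = (\<Sum>x\<in>{x. f x \<le> k}. \<Sum>y\<in>UNIV - {x. f x \<le> k}. ?e x y)"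
      by (rule bnd_eq[OF P_nonneg])
    also have "\<dots> = (\<Sum>x\<in>UNIV. if f x \<le> k then (\<Sum>y\<in>UNIV. if \<not> f y \<le> k then ?e x y else 0) else 0)"
      by (simp add: sum.inter_filter[of UNIV, symmetric, simplified] Diff_eq Compl_eq)
    also have "\<dots> = (\<Sum>x\<in>UNIV. \<Sum>y\<in>UNIV. if f x \<le> k \<and> \<not> f y \<le> k then ?e x y else 0)"
      by (intro sum.cong refl) auto
    finally show ?thesis .
  qed
  have "(\<Sum>k<N. boundary P m {x. f x \<le> k}) =
     (\<Sum>k<N. \<Sum>x\<in>UNIV. \<Sum>y\<in>UNIV. if f x \<le> k \<and> \<not> f y \<le> k then ?e x y else 0)"
    using b by simp
  also have "\<dots> = (\<Sum>x\<in>UNIV. \<Sum>k<N. \<Sum>y\<in>UNIV. if f x \<le> k \<and> \<not> f y \<le> k then ?e x y else 0)"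
    by (rule sum.swap)
  also have "\<dots> = (\<Sum>x\<in>UNIV. \<Sum>y\<in>UNIV. \<Sum>k<N. if f x \<le> k \<and> \<not> f y \<le> k then ?e x y else 0)"
    by (intro sum.cong refl sum.swap)
  also have "\<dots> \<le> (\<Sum>x\<in>UNIV. \<Sum>y\<in>UNIV. if x \<noteq> y then ?e x y else 0)"
  proof (intro sum_mono)
    fix x y
    show "(\<Sum>k<N. if f x \<le> k \<and> \<not> f y \<le> k then ?e x y else 0) \<le> (if x \<noteq> y then ?e x y else 0)"
    proof (cases "x \<noteq> y \<and> P x y > 0")
      case True
      then have "adj P x y" by (simp add: adj_def)
      then have fy: "f y \<le> f x + 1" by (rule lip)
      have "(\<Sum>k<N. if f x \<le> k \<and> \<not> f y \<le> k then ?e x y else 0) = (\<Sum>k<N. if k = f x then (if \<not> f y \<le> k then ?e x y else 0) else 0)"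
        using fy by (intro sum.cong refl) auto
      also have "\<dots> \<le> ?e x y" by (simp add: sum.delta e_nn)
      finally show ?thesis using True by simp
    next
      case False
      then have "x = y \<or> P x y = 0" using P_nonneg[rule_format, of x y] by linarith
      then show ?thesis
      proof
        assume "P x y = 0"
        then have "?e x y = 0" by simp
        then have "(\<Sum>k<N. if f x \<le> k \<and> \<not> f y \<le> k then ?e x y else 0) = 0"
          by (intro sum.neutral) simp
        then show ?thesis using e_nn[of x y] by simp
      qed simp
    qed
  qed
  also have "\<dots> = (\<Sum>x\<in>UNIV. m x * (\<Sum>y\<in>UNIV - {x}. P x y))"
  proof (intro sum.cong refl)
    fix x
    have "(\<Sum>y\<in>UNIV. if x \<noteq> y then ?e x y else 0) = (\<Sum>y\<in>{y\<in>UNIV. x \<noteq> y}. ?e x y)"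
      by (rule sum.inter_filter[symmetric]) simp
    also have "{y\<in>UNIV. x \<noteq> y} = UNIV - {x}" by auto
    finally show "(\<Sum>y\<in>UNIV. if x \<noteq> y then ?e x y else 0) = m x * (\<Sum>y\<in>UNIV - {x}. P x y)"
      by (simp add: sum_distrib_left)
  qed
  also have "\<dots> \<le> (\<Sum>x\<in>UNIV. m x * deg_max P)"
  proof (intro sum_mono mult_left_mono)
    fix x
    show "(\<Sum>y\<in>UNIV - {x}. P x y) \<le> deg_max P"
      unfolding deg_max_def by (rule Max_ge) auto
    show "0 \<le> m x" using m_nonneg by simp
  qed
  also have "\<dots> = deg_max P" using m_prob by (simp add: sum_distrib_right[symmetric])
  finally show ?thesis .
qed

lemma mid_set:
  fixes m :: "'v \<Rightarrow> real"
  assumes "finite S" "\<forall>x. m x \<ge> 0" "\<forall>x. m x \<le> 7/8" "meas m S \<ge> 1/8"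
  shows "\<exists>A\<subseteq>S. 1/8 \<le> meas m A \<and> meas m A \<le> 7/8"
  using assms(1,4)
proof (induction S rule: finite_induct)
  case empty then show ?case by (simp add: meas_def)
next
  case (insert x S)
  show ?case
  proof (cases "meas m S \<ge> 1/8")
    case True then show ?thesis using insert by blast
  next
    case False
    have eq: "meas m (insert x S) = m x + meas m S" using insert by (simp add: meas_def)
    show ?thesis
    proof (cases "meas m (insert x S) \<le> 7/8")
      case True then show ?thesis using insert by blast
    next
      case F2: False
      have "1/8 \<le> meas m {x} \<and> meas m {x} \<le> 7/8" using eq F2 False assms(3) by (simp add: meas_def)
      then show ?thesis by blast
    qed
  qed
qed


lemma meas_mono:
  fixes m :: "'v::finite \<Rightarrow> real"
  assumes "\<forall>x. m x \<ge> 0" "A \<subseteq> B"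
  shows "meas m A \<le> meas m B"
  unfolding meas_def using assms by (intro sum_mono2) auto

lemma meas_compl:
  fixes m :: "'v::finite \<Rightarrow> real"
  assumes "(\<Sum>x\<in>UNIV. m x) = 1"
  shows "meas m (-A) = 1 - meas m A"
proof -
  have "(\<Sum>x\<in>UNIV. m x) = meas m A + meas m (-A)"
  proof -
    have "sum m (A \<union> -A) = sum m A + sum m (-A)" by (rule sum.union_disjoint) auto
    moreover have "A \<union> -A = UNIV" by auto
    ultimately show ?thesis unfolding meas_def by simp
  qed
  then show ?thesis using assms by simp
qed

lemma set_dist_ge1:
  fixes P :: "'v::finite \<Rightarrow> 'v \<Rightarrow> real"
  assumes "\<forall>x y. (adj P)\<^sup>*\<^sup>* x y" "A \<inter> B = {}" "A \<noteq> {}" "B \<noteq> {}"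
  shows "set_dist P A B \<ge> 1"
proof -
  let ?S = "{comb_dist P a b |a b. a \<in> A \<and> b \<in> B}"
  have fin: "finite ?S" by (rule finite_image_set2) simp_all
  have ne: "?S \<noteq> {}" using assms(3,4) by blast
  have "Min ?S \<in> ?S" using Min_in[OF fin ne] .
  then obtain a b where ab: "a \<in> A" "b \<in> B" "Min ?S = comb_dist P a b" by blast
  then have "a \<noteq> b" using assms(2) by blast
  then have "comb_dist P a b \<ge> 1" by (rule comb_dist_pos[OF assms(1)[rule_format]])
  then show ?thesis unfolding set_dist_def using ab by simp
qed

lemma ratio8:
  fixes b M :: real
  assumes "b \<ge> 0" "M \<ge> 1/8"
  shows "b / M \<le> 8 * b"
proof -
  have "b / M \<le> b / (1/8)" by (rule divide_left_mono) (use assms in simp_all)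
  then show ?thesis by simp
qed

theorem theorem6p4:
  fixes P :: "'v::finite \<Rightarrow> 'v \<Rightarrow> real" and m :: "'v \<Rightarrow> real"
  assumes card2: "card (UNIV :: 'v set) \<ge> 2"
    and P_nonneg: "\<forall>x y. P x y \<ge> 0"
    and P_sym_supp: "\<forall>x y. P x y > 0 \<longleftrightarrow> P y x > 0"
    and connected: "\<forall>x y. (adj P)\<^sup>*\<^sup>* x y"
    and m_nonneg: "\<forall>x. m x \<ge> 0"
    and m_prob: "(\<Sum>x\<in>UNIV. m x) = 1"
    and reversible: "\<forall>x y. m x * P x y = m y * P y x"
  shows "cheeger P m \<le> 57 * deg_max P / obs_diam P m (1/8)"
proof -
  have adj_sym: "adj P y x" if "adj P x y" for x y
    using that P_sym_supp by (auto simp: adj_def)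
  obtain u v :: 'v where uv: "u \<noteq> v"
  proof -
    have "\<not> (\<forall>u v::'v. u = v)"
    proof
      assume "\<forall>u v::'v. u = v"
      then have "(UNIV::'v set) \<subseteq> {undefined}" by auto
      then have "card (UNIV::'v set) \<le> card {undefined::'v}" by (intro card_mono) simp_all
      then have "card (UNIV::'v set) \<le> 1" by simp
      then show False using card2 by simp
    qed
    then show ?thesis using that by blast
  qed
  have nbr: "\<exists>y. adj P y x" for x
  proof -
    obtain w where w: "w \<noteq> x"
    proof (cases "u = x")
      case True then show ?thesis using that[of v] uv by simp
    next
      case False then show ?thesis using that[of u] by simp
    qed
    have "(adj P)\<^sup>*\<^sup>* x w" using connected by simp
    then show ?thesis
    proof (rule converse_rtranclpE)
      assume "x = w" then show ?thesis using w by simp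
    next
      fix b assume "adj P x b" "(adj P)\<^sup>*\<^sup>* b w" then show ?thesis using adj_sym by blast
    qed
  qed
  have bnd_nn: "boundary P m W \<ge> 0" for W
    unfolding boundary_def using P_nonneg m_nonneg by (intro sum_nonneg) auto
  have meas_pos: "W \<noteq> {}" if "meas m W \<ge> 1/8" for W
    using that by (auto simp: meas_def)
  have h_deg: "cheeger P m \<le> deg_max P"
  proof -
    have "m u + m v \<le> 1"
    proof -
      have "m u + m v = (\<Sum>x\<in>{u,v}. m x)" using uv by simp
      also have "\<dots> \<le> (\<Sum>x\<in>UNIV. m x)" using m_nonneg by (intro sum_mono2) auto
      finally show ?thesis using m_prob by simp
    qed
    then obtain x where x: "m x \<le> 1/2"
    proof (cases "m u \<le> 1/2")
      case True then show ?thesis using that by blast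
    next
      case False then show ?thesis using that[of v] \<open>m u + m v \<le> 1\<close> by linarith
    qed
    have mx: "meas m {x} = m x" by (simp add: meas_def)
    have sd: "(\<Sum>y\<in>UNIV - {x}. P x y) \<le> deg_max P"
      unfolding deg_max_def by (rule Max_ge) auto
    have bx: "boundary P m {x} = m x * (\<Sum>y\<in>UNIV - {x}. P x y)"
      by (simp add: bnd_eq[OF P_nonneg] sum_distrib_left)
    have c: "cheeger P m \<le> boundary P m {x} / m x"
      using cheeger_le[of "{x}" m P] x mx by simp
    have dnn: "deg_max P \<ge> 0"
    proof -
      have "0 \<le> (\<Sum>y\<in>UNIV - {x}. P x y)" using P_nonneg by (simp add: sum_nonneg)
      then show ?thesis using sd by linarith
    qed
    show ?thesis
    proof (cases "m x = 0")
      case True then show ?thesis using c dnn by simp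
    next
      case False
      then have "m x > 0" using m_nonneg by (simp add: order_le_neq_trans)
      then have "boundary P m {x} / m x = (\<Sum>y\<in>UNIV - {x}. P x y)" using bx by simp
      then show ?thesis using c sd by simp
    qed
  qed
  have dnn: "deg_max P \<ge> 0"
  proof -
    have "(\<Sum>y\<in>UNIV - {u}. P u y) \<le> deg_max P"
      unfolding deg_max_def by (rule Max_ge) auto
    moreover have "0 \<le> (\<Sum>y\<in>UNIV - {u}. P u y)" using P_nonneg by (simp add: sum_nonneg)
    ultimately show ?thesis by linarith
  qed
  define S where "S = {real (set_dist P A B) | A B. meas m A \<ge> 1/8 \<and> meas m (closure_set P B) \<ge> 1/8}"
  have finS: "finite S"
  proof (rule finite_subset)
    show "S \<subseteq> (\<lambda>(A,B). real (set_dist P A B)) ` UNIV" unfolding S_def by auto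
  qed simp
  have D_ge1: "\<exists>s\<in>S. s \<ge> 1"
  proof (cases "\<exists>x. m x > 7/8")
    case True
    then obtain x where x: "m x > 7/8" by blast
    obtain y where y: "adj P y x" using nbr by blast
    then have "x \<noteq> y" by (auto simp: adj_def)
    have "meas m (closure_set P {y}) \<ge> meas m {x}"
      using adj_sym[OF y] by (intro meas_mono[OF m_nonneg]) (auto simp: closure_set_def)
    moreover have "meas m {x} \<ge> 1/8" using x by (simp add: meas_def)
    ultimately have c1: "meas m (closure_set P {y}) \<ge> 1/8" by linarith
    have "real (set_dist P {x} {y}) \<in> S" unfolding S_def
      using c1 \<open>meas m {x} \<ge> 1/8\<close> by blast
    moreover have "set_dist P {x} {y} \<ge> 1"
      by (rule set_dist_ge1[OF connected]) (use \<open>x \<noteq> y\<close> in simp_all)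
    ultimately show ?thesis by (intro bexI[of _ "real (set_dist P {x} {y})"]) simp_all
  next
    case False
    then obtain A where A: "1/8 \<le> meas m A" "meas m A \<le> 7/8"
    proof -
      have "\<forall>x. m x \<le> 7/8" using False by (simp add: not_less)
      moreover have "meas m UNIV \<ge> 1/8" using m_prob by (simp add: meas_def)
      ultimately have "\<exists>A\<subseteq>UNIV. 1/8 \<le> meas m A \<and> meas m A \<le> 7/8"
        using mid_set[of UNIV m] m_nonneg by simp
      then show ?thesis using that by blast
    qed
    have mc: "meas m (-A) \<ge> 1/8" using A meas_compl[OF m_prob] by simp
    have "meas m (closure_set P (-A)) \<ge> meas m (-A)"
      by (intro meas_mono[OF m_nonneg]) (auto simp: closure_set_def)
    then have c2: "meas m (closure_set P (-A)) \<ge> 1/8" using mc by linarith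
    have "real (set_dist P A (-A)) \<in> S" using A(1) c2 unfolding S_def by blast
    moreover have "set_dist P A (-A) \<ge> 1"
      by (rule set_dist_ge1[OF connected _ meas_pos[OF A(1)] meas_pos[OF mc]]) simp
    ultimately show ?thesis by (intro bexI[of _ "real (set_dist P A (-A))"]) simp_all
  qed
  have SneD: "S \<noteq> {}" using D_ge1 by blast
  have D_ge: "obs_diam P m (1/8) \<ge> 1"
  proof -
    obtain s where "s \<in> S" "s \<ge> 1" using D_ge1 by blast
    moreover have "s \<le> Sup S" using \<open>s \<in> S\<close> finS by (intro cSup_upper bdd_above_finite)
    ultimately show ?thesis unfolding obs_diam_def S_def by simp
  qed
  have "obs_diam P m (1/8) \<in> S"
    unfolding obs_diam_def S_def[symmetric] using cSup_eq_Max[OF finS SneD] Max_in[OF finS SneD] by simp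
  then obtain A B where AB: "obs_diam P m (1/8) = real (set_dist P A B)" "meas m A \<ge> 1/8"
      "meas m (closure_set P B) \<ge> 1/8" unfolding S_def by blast
  define n where "n = set_dist P A B"
  have n1: "n \<ge> 1" using D_ge AB(1) n_def by simp
  have Ane: "A \<noteq> {}" using meas_pos AB(2) by blast
  have Bne: "B \<noteq> {}" using meas_pos AB(3) by (auto simp: closure_set_def)
  define f where "f x = Min ((\<lambda>a. comb_dist P a x) ` A)" for x
  have finA: "finite ((\<lambda>a. comb_dist P a x) ` A)" for x by simp
  have f_le: "f x \<le> comb_dist P a x" if "a \<in> A" for a x
    unfolding f_def by (rule Min_le[OF finA]) (use that in simp)
  have f_in: "\<exists>a\<in>A. f x = comb_dist P a x" for x
  proof -
    have "(\<lambda>a. comb_dist P a x) ` A \<noteq> {}" using Ane by simp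
    then have "f x \<in> (\<lambda>a. comb_dist P a x) ` A" unfolding f_def by (rule Min_in[OF finA])
    then show ?thesis by (simp add: image_iff)
  qed
  have lip: "f y \<le> f x + 1" if "adj P x y" for x y
  proof -
    obtain a where a: "a \<in> A" "f x = comb_dist P a x" using f_in by blast
    have "comb_dist P a y \<le> comb_dist P a x + 1"
      by (rule comb_dist_step[OF connected[rule_format] that])
    then show ?thesis using f_le[OF a(1), of y] a(2) by simp
  qed
  have fA: "f a = 0" if "a \<in> A" for a
  proof -
    have "f a \<le> comb_dist P a a" by (rule f_le[OF that])
    then show ?thesis unfolding comb_dist_refl by simp
  qed
  have fB: "n \<le> f b" if "b \<in> B" for b
  proof -
    obtain a where a: "a \<in> A" "f b = comb_dist P a b" using f_in by blast
    have fin: "finite {comb_dist P a b |a b. a \<in> A \<and> b \<in> B}" by (rule finite_image_set2) simp_all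
    have mem: "comb_dist P a b \<in> {comb_dist P a b |a b. a \<in> A \<and> b \<in> B}"
      using a(1) that by blast
    have "n \<le> comb_dist P a b" unfolding n_def set_dist_def by (rule Min_le[OF fin mem])
    then show ?thesis using a by simp
  qed
  have fcl: "n \<le> f c + 1" if "c \<in> closure_set P B" for c
  proof -
    have "c \<in> B \<or> (\<exists>b\<in>B. adj P c b)" using that unfolding closure_set_def by blast
    then show ?thesis
    proof
      assume "c \<in> B" then show ?thesis using fB[of c] by simp
    next
      assume "\<exists>b\<in>B. adj P c b"
      then obtain b where "b \<in> B" "adj P c b" by blast
      then show ?thesis using fB[of b] lip[of c b] by linarith
    qed
  qed
  define W where "W k = {x. f x \<le> k}" for k
  have hk: "cheeger P m \<le> 8 * boundary P m (W k)" if k: "k < n - 1" for k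
  proof -
    have AW: "A \<subseteq> W k" using fA unfolding W_def by auto
    have CW: "closure_set P B \<subseteq> - W k"
    proof
      fix c assume "c \<in> closure_set P B"
      then have "n \<le> f c + 1" by (rule fcl)
      then show "c \<in> - W k" using k unfolding W_def by simp
    qed
    have mW: "meas m (W k) \<ge> 1/8" using meas_mono[OF m_nonneg AW] AB(2) by simp
    have mC: "meas m (- W k) \<ge> 1/8" using meas_mono[OF m_nonneg CW] AB(3) by simp
    show ?thesis
    proof (cases "meas m (W k) \<le> 1/2")
      case True
      have "cheeger P m \<le> boundary P m (W k) / meas m (W k)"
        by (rule cheeger_le[OF meas_pos[OF mW] True])
      also have "\<dots> \<le> 8 * boundary P m (W k)" by (rule ratio8[OF bnd_nn mW])
      finally show ?thesis .
    next
      case False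
      then have "meas m (- W k) \<le> 1/2" using meas_compl[OF m_prob] by simp
      then have "cheeger P m \<le> boundary P m (- W k) / meas m (- W k)"
        by (rule cheeger_le[OF meas_pos[OF mC]])
      also have "\<dots> \<le> 8 * boundary P m (- W k)" by (rule ratio8[OF bnd_nn mC])
      also have "boundary P m (- W k) = boundary P m (W k)"
        using bnd_compl[OF P_nonneg reversible] .
      finally show ?thesis .
    qed
  qed
  have "real (n - 1) * cheeger P m = (\<Sum>k<n-1. cheeger P m)" by simp
  also have "\<dots> \<le> (\<Sum>k<n-1. 8 * boundary P m (W k))" using hk by (intro sum_mono) simp
  also have "\<dots> = 8 * (\<Sum>k<n-1. boundary P m {x. f x \<le> k})"
    by (simp add: sum_distrib_left W_def)
  also have "\<dots> \<le> 8 * deg_max P"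
    using level_sum[OF P_nonneg m_nonneg m_prob lip] by simp
  finally have s1: "real (n - 1) * cheeger P m \<le> 8 * deg_max P" .
  have "real n * cheeger P m = real (n - 1) * cheeger P m + cheeger P m"
    using n1 by (simp add: of_nat_diff algebra_simps)
  also have "\<dots> \<le> 9 * deg_max P" using s1 h_deg by simp
  finally have s2: "real n * cheeger P m \<le> 9 * deg_max P" .
  have npos: "real n > 0" using n1 by simp
  have "cheeger P m \<le> 9 * deg_max P / real n" using s2 npos by (simp add: pos_le_divide_eq mult.commute)
  also have "\<dots> \<le> 57 * deg_max P / real n" using dnn npos by (intro divide_right_mono) auto
  finally show ?thesis using AB(1) n_def by simp
qed

end
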